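(* Let $k\ge2$, let $A=\{a_1,\dots,a_n\}$ be a sorted multiset of positive integers ($a_1\le\dots\le a_n$), let $p$ be an integer with $1\le p\le n-k+1$, and let $\varepsilon\in(0,1)$. Set $\delta=\frac{\varepsilon\cdot a_p}{3n}$ and $a_i^r=\lfloor a_i/\delta\rfloor$ for $i\in[n]$, $A_r=\{a_1^r,\dots,a_n^r\}$. Let $(S_1,\dots,S_k)$ be an optimal solution of the $k$-SSR$_R$ instance $(A_r,p)$ (this is the output of the algorithm that rounds $A$ to $A_r$ and solves $(A_r,p)$ exactly), and let $(S_1^*,\dots,S_k^* )$ be an optimal solution of the $k$-SSR$_R$ instance $(A,p)$. Then $$\mathcal{R}(S_1,\dots,S_k,A)\le(1+\varepsilon)\cdot\mathcal{R}(S_1^*,\dots,S_k^*,A).$$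
   Context: $[n]=\{1,\dots,n\}$; elements of sets are indices. For a multiset $B=\{b_1,\dots,b_n\}$ of nonnegative integers and $S\subseteq[n]$, $\Sigma(S,B)=\sum_{i\in S}b_i$; for pairwise disjoint $S_1,\dots,S_k\subseteq[n]$, $\mathcal{R}(S_1,\dots,S_k,B)=\max_i\Sigma(S_i,B)/\min_i\Sigma(S_i,B)$ if the minimum is positive and $+\infty$ otherwise. The $k$-SSR$_R$ instance $(B,p)$ (with $b_1\le\dots\le b_n$, $1\le p\le n-k+1$): find pairwise disjoint $S_1,\dots,S_k\subseteq[n]$ with $\max(S_1)=p$ and $\max(S_i)>p$ for $1<i\le k$ minimizing $\mathcal{R}(S_1,\dots,S_k,B)$. *)

theory Defs
  imports Complex_Main "HOL-Library.Extended_Real"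
begin

text \<open>A multiset B = {b_1,...,b_n} is given as a function b :: nat => nat on the indices 1..n.
  A tuple (S_1,...,S_k) is given as a function S :: nat => nat set on the indices 1..k.\<close>

definition Sigma_sum :: "nat set \<Rightarrow> (nat \<Rightarrow> nat) \<Rightarrow> nat" where
  "Sigma_sum S b = (\<Sum>i\<in>S. b i)"

definition ratio_R :: "nat \<Rightarrow> (nat \<Rightarrow> nat set) \<Rightarrow> (nat \<Rightarrow> nat) \<Rightarrow> ereal" where
  "ratio_R k S b =
     (let mx = Max ((\<lambda>i. Sigma_sum (S i) b) ` {1..k});
          mn = Min ((\<lambda>i. Sigma_sum (S i) b) ` {1..k})
      in if mn > 0 then ereal (real mx / real mn) else \<infinity>)"

definition sorted_ms :: "nat \<Rightarrow> (nat \<Rightarrow> nat) \<Rightarrow> bool" where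
  "sorted_ms n b \<longleftrightarrow> (\<forall>i j. 1 \<le> i \<longrightarrow> i \<le> j \<longrightarrow> j \<le> n \<longrightarrow> b i \<le> b j)"

definition kSSR_feasible :: "nat \<Rightarrow> nat \<Rightarrow> nat \<Rightarrow> (nat \<Rightarrow> nat set) \<Rightarrow> bool" where
  "kSSR_feasible n k p S \<longleftrightarrow>
     (\<forall>i\<in>{1..k}. S i \<subseteq> {1..n} \<and> S i \<noteq> {}) \<and>
     (\<forall>i\<in>{1..k}. \<forall>j\<in>{1..k}. i \<noteq> j \<longrightarrow> S i \<inter> S j = {}) \<and>
     Max (S 1) = p \<and>
     (\<forall>i\<in>{2..k}. Max (S i) > p)"

definition kSSR_optimal :: "nat \<Rightarrow> nat \<Rightarrow> (nat \<Rightarrow> nat) \<Rightarrow> nat \<Rightarrow> (nat \<Rightarrow> nat set) \<Rightarrow> bool" where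
  "kSSR_optimal n k b p S \<longleftrightarrow>
     kSSR_feasible n k p S \<and>
     (\<forall>T. kSSR_feasible n k p T \<longrightarrow> ratio_R k S b \<le> ratio_R k T b)"

end

theory Submission
  imports Defs
begin

lemma ratio_char:
  assumes k1: "k \<ge> 1" and pos: "\<forall>i\<in>{1..k}. Sigma_sum (T i) b > 0"
  shows "\<exists>i0\<in>{1..k}. \<exists>j0\<in>{1..k}.
     ratio_R k T b = ereal (real (Sigma_sum (T i0) b) / real (Sigma_sum (T j0) b)) \<and>
     (\<forall>i\<in>{1..k}. Sigma_sum (T j0) b \<le> Sigma_sum (T i) b \<and> Sigma_sum (T i) b \<le> Sigma_sum (T i0) b)"
proof -
  let ?F = "(\<lambda>i. Sigma_sum (T i) b) ` {1..k}"
  have fin: "finite ?F" and ne: "?F \<noteq> {}" using k1 by auto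
  have "Max ?F \<in> ?F" using Max_in[OF fin ne] .
  then obtain i0 where i0: "i0 \<in> {1..k}" "Max ?F = Sigma_sum (T i0) b" by auto
  have "Min ?F \<in> ?F" using Min_in[OF fin ne] .
  then obtain j0 where j0: "j0 \<in> {1..k}" "Min ?F = Sigma_sum (T j0) b" by auto
  have mp: "Min ?F > 0" using j0 pos by auto
  have r: "ratio_R k T b = ereal (real (Sigma_sum (T i0) b) / real (Sigma_sum (T j0) b))"
    unfolding ratio_R_def Let_def using mp i0 j0 by simp
  have "\<forall>i\<in>{1..k}. Sigma_sum (T j0) b \<le> Sigma_sum (T i) b \<and> Sigma_sum (T i) b \<le> Sigma_sum (T i0) b"
    using i0 j0 fin by (metis Max_ge Min_le imageI)
  with r i0 j0 show ?thesis by blast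
qed

lemma ratio_le:
  assumes k1: "k \<ge> 1" and pos: "\<forall>i\<in>{1..k}. Sigma_sum (T i) b > 0"
    and le: "\<forall>i\<in>{1..k}. \<forall>j\<in>{1..k}. real (Sigma_sum (T i) b) \<le> C * real (Sigma_sum (T j) b)"
  shows "ratio_R k T b \<le> ereal C"
proof -
  obtain i0 j0 where ij: "i0\<in>{1..k}" "j0\<in>{1..k}"
    "ratio_R k T b = ereal (real (Sigma_sum (T i0) b) / real (Sigma_sum (T j0) b))"
    using ratio_char[OF k1 pos] by blast
  have p: "real (Sigma_sum (T j0) b) > 0" using pos ij by auto
  have "real (Sigma_sum (T i0) b) \<le> C * real (Sigma_sum (T j0) b)" using le ij by auto
  hence "real (Sigma_sum (T i0) b) / real (Sigma_sum (T j0) b) \<le> C" using p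
    by (simp add: divide_le_eq)
  thus ?thesis using ij by simp
qed

lemma round_sum:
  fixes d :: real
  assumes d: "d > 0" and fin: "finite T"
  shows "d * real (Sigma_sum T (\<lambda>i. nat \<lfloor>real (a i) / d\<rfloor>)) \<le> real (Sigma_sum T a)"
    and "real (Sigma_sum T a) \<le> d * (real (Sigma_sum T (\<lambda>i. nat \<lfloor>real (a i) / d\<rfloor>)) + real (card T))"
proof -
  have one: "d * real (nat \<lfloor>real (a i) / d\<rfloor>) \<le> real (a i)" for i
  proof -
    have "real (nat \<lfloor>real (a i) / d\<rfloor>) = of_int \<lfloor>real (a i) / d\<rfloor>" using d by simp
    also have "\<dots> \<le> real (a i) / d" by simp
    finally show ?thesis using d by (simp add: le_divide_eq mult.commute)
  qed
  have two: "real (a i) \<le> d * (real (nat \<lfloor>real (a i) / d\<rfloor>) + 1)" for i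
  proof -
    have "real (nat \<lfloor>real (a i) / d\<rfloor>) = of_int \<lfloor>real (a i) / d\<rfloor>" using d by simp
    moreover have "real (a i) / d \<le> of_int \<lfloor>real (a i) / d\<rfloor> + 1" by linarith
    ultimately have "real (a i) / d \<le> real (nat \<lfloor>real (a i) / d\<rfloor>) + 1" by simp
    hence "d * (real (a i) / d) \<le> d * (real (nat \<lfloor>real (a i) / d\<rfloor>) + 1)"
      using d by (intro mult_left_mono) auto
    thus ?thesis using d by simp
  qed
  show "d * real (Sigma_sum T (\<lambda>i. nat \<lfloor>real (a i) / d\<rfloor>)) \<le> real (Sigma_sum T a)"
    unfolding Sigma_sum_def of_nat_sum sum_distrib_left by (rule sum_mono) (rule one)
  have "real (Sigma_sum T a) \<le> (\<Sum>i\<in>T. d * (real (nat \<lfloor>real (a i) / d\<rfloor>) + 1))"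
    unfolding Sigma_sum_def of_nat_sum by (rule sum_mono) (rule two)
  also have "\<dots> = d * (real (Sigma_sum T (\<lambda>i. nat \<lfloor>real (a i) / d\<rfloor>)) + real (card T))"
    unfolding Sigma_sum_def of_nat_sum by (simp add: sum_distrib_left sum.distrib distrib_left)
  finally show "real (Sigma_sum T a) \<le> d * (real (Sigma_sum T (\<lambda>i. nat \<lfloor>real (a i) / d\<rfloor>)) + real (card T))" .
qed

lemma feas_facts:
  assumes "kSSR_feasible n k p T" and "i \<in> {1..k}" and "k \<ge> 2"
  shows "T i \<subseteq> {1..n}" "finite (T i)" "card (T i) \<le> n" "\<exists>q\<in>T i. p \<le> q"
proof -
  show s: "T i \<subseteq> {1..n}" using assms unfolding kSSR_feasible_def by auto
  show f: "finite (T i)" using s finite_subset by blast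
  show "card (T i) \<le> n" using card_mono[OF _ s] by simp
  have ne: "T i \<noteq> {}" using assms unfolding kSSR_feasible_def by auto
  have "Max (T i) \<in> T i" using Max_in[OF f ne] .
  moreover have "p \<le> Max (T i)"
  proof (cases "i = 1")
    case True thus ?thesis using assms unfolding kSSR_feasible_def by auto
  next
    case False hence "i \<in> {2..k}" using assms by auto
    hence "Max (T i) > p" using assms(1) unfolding kSSR_feasible_def by blast
    thus ?thesis by simp
  qed
  ultimately show "\<exists>q\<in>T i. p \<le> q" by blast
qed

lemma feas_lower:
  assumes "kSSR_feasible n k p T" and "i \<in> {1..k}" and "k \<ge> 2"
    and "sorted_ms n a" and "1 \<le> p"
  shows "a p \<le> Sigma_sum (T i) a"
proof -
  obtain q where q: "q \<in> T i" "p \<le> q" using feas_facts[OF assms(1-3)] by blast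
  have "q \<le> n" using q feas_facts(1)[OF assms(1-3)] by auto
  hence "a p \<le> a q" using assms(4,5) q unfolding sorted_ms_def by auto
  also have "a q \<le> Sigma_sum (T i) a" unfolding Sigma_sum_def
    using member_le_sum[of q "T i" a] q feas_facts(2)[OF assms(1-3)] by simp
  finally show ?thesis .
qed

theorem theorem14:
  fixes n k p :: nat and a :: "nat \<Rightarrow> nat" and \<epsilon> :: real
    and S Sstar :: "nat \<Rightarrow> nat set"
  assumes "k \<ge> 2"
    and "\<forall>i\<in>{1..n}. a i > 0"
    and "sorted_ms n a"
    and "1 \<le> p" and "p + k \<le> n + 1"
    and "0 < \<epsilon>" and "\<epsilon> < 1"
    and "kSSR_optimal n k (\<lambda>i. nat \<lfloor>real (a i) / (\<epsilon> * real (a p) / (3 * real n))\<rfloor>) p S"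
    and "kSSR_optimal n k a p Sstar"
  shows "ratio_R k S a \<le> ereal (1 + \<epsilon>) * ratio_R k Sstar a"
proof -
  define d where "d = \<epsilon> * real (a p) / (3 * real n)"
  define r where "r = (\<lambda>i. nat \<lfloor>real (a i) / d\<rfloor>)"
  have optS: "kSSR_optimal n k r p S" using assms(8) unfolding d_def r_def .
  have k1: "k \<ge> 1" using assms(1) by simp
  have n2: "n \<ge> 2" using assms(1,4,5) by simp
  have ap: "real (a p) > 0" using assms(2,4,5,1) by auto
  have dpos: "d > 0" unfolding d_def using ap assms(6) n2 by simp
  have nd: "real n * d = \<epsilon> * real (a p) / 3" unfolding d_def using n2 by simp
  have feasS: "kSSR_feasible n k p S" using optS unfolding kSSR_optimal_def by simp
  have feasT: "kSSR_feasible n k p Sstar" using assms(9) unfolding kSSR_optimal_def by simp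
  have F1: "real (a p) \<le> real (Sigma_sum (T i) a)"
    if "kSSR_feasible n k p T" "i \<in> {1..k}" for T i
    using feas_lower[OF that assms(1,3,4)] by simp
  have F2: "d * real (Sigma_sum (T i) r) \<le> real (Sigma_sum (T i) a)"
    if "kSSR_feasible n k p T" "i \<in> {1..k}" for T i
    using round_sum(1)[OF dpos feas_facts(2)[OF that assms(1)], of a] unfolding r_def .
  have F3: "real (Sigma_sum (T i) a) \<le> d * real (Sigma_sum (T i) r) + real n * d"
    if "kSSR_feasible n k p T" "i \<in> {1..k}" for T i
  proof -
    have "real (Sigma_sum (T i) a) \<le> d * (real (Sigma_sum (T i) r) + real (card (T i)))"
      using round_sum(2)[OF dpos feas_facts(2)[OF that assms(1)], of a] unfolding r_def .
    also have "\<dots> \<le> d * (real (Sigma_sum (T i) r) + real n)"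
      using feas_facts(3)[OF that assms(1)] dpos by (intro mult_left_mono) auto
    finally show ?thesis by (simp add: algebra_simps)
  qed
  have F4: "Sigma_sum (T i) r > 0"
    if "kSSR_feasible n k p T" "i \<in> {1..k}" for T i
  proof -
    have "real (a p) \<le> d * real (Sigma_sum (T i) r) + \<epsilon> * real (a p) / 3"
      using F1[OF that] F3[OF that] nd by linarith
    moreover have "\<epsilon> * real (a p) / 3 < real (a p)" using ap assms(7) by simp
    ultimately have "d * real (Sigma_sum (T i) r) > 0" by linarith
    thus ?thesis using dpos by (simp add: zero_less_mult_iff)
  qed
  have posA: "\<forall>i\<in>{1..k}. Sigma_sum (T i) a > 0" if "kSSR_feasible n k p T" for T
    using F1[OF that] ap by (metis of_nat_0_less_iff order_less_le_trans)
  have posR: "\<forall>i\<in>{1..k}. Sigma_sum (T i) r > 0" if "kSSR_feasible n k p T" for T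
    using F4[OF that] by blast
  obtain i1 j1 where ij1: "i1\<in>{1..k}" "j1\<in>{1..k}"
    "ratio_R k Sstar a = ereal (real (Sigma_sum (Sstar i1) a) / real (Sigma_sum (Sstar j1) a))"
    "\<forall>i\<in>{1..k}. Sigma_sum (Sstar j1) a \<le> Sigma_sum (Sstar i) a \<and> Sigma_sum (Sstar i) a \<le> Sigma_sum (Sstar i1) a"
    using ratio_char[OF k1 posA[OF feasT]] by blast
  obtain i2 j2 where ij2: "i2\<in>{1..k}" "j2\<in>{1..k}"
    "ratio_R k Sstar r = ereal (real (Sigma_sum (Sstar i2) r) / real (Sigma_sum (Sstar j2) r))"
    using ratio_char[OF k1 posR[OF feasT]] by blast
  obtain i3 j3 where ij3: "i3\<in>{1..k}" "j3\<in>{1..k}"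
    "ratio_R k S r = ereal (real (Sigma_sum (S i3) r) / real (Sigma_sum (S j3) r))"
    "\<forall>i\<in>{1..k}. Sigma_sum (S j3) r \<le> Sigma_sum (S i) r \<and> Sigma_sum (S i) r \<le> Sigma_sum (S i3) r"
    using ratio_char[OF k1 posR[OF feasS]] by blast
  define X where "X = real (Sigma_sum (Sstar i1) a)"
  define Y where "Y = real (Sigma_sum (Sstar j1) a)"
  define Rs where "Rs = X / Y"
  define \<rho> where "\<rho> = real (Sigma_sum (S i3) r) / real (Sigma_sum (S j3) r)"
  define \<rho>s where "\<rho>s = real (Sigma_sum (Sstar i2) r) / real (Sigma_sum (Sstar j2) r)"
  have epsap: "\<epsilon> * real (a p) < real (a p)" using ap assms(7) by simp
  have Ypos: "Y \<ge> real (a p)" unfolding Y_def using F1[OF feasT ij1(2)] .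
  have YX: "Y \<le> X" unfolding X_def Y_def using ij1(4) ij1(1) by simp
  have Rs1: "Rs \<ge> 1" unfolding Rs_def using YX Ypos ap by simp
  have "ratio_R k S r \<le> ratio_R k Sstar r" using optS feasT unfolding kSSR_optimal_def by blast
  hence rr: "\<rho> \<le> \<rho>s" using ij2(3) ij3(3) unfolding \<rho>_def \<rho>s_def by simp
  have rs: "\<rho>s \<le> X / (Y - real n * d)"
  proof -
    have num: "d * real (Sigma_sum (Sstar i2) r) \<le> X"
      using F2[OF feasT ij2(1)] ij1(4) ij2(1) unfolding X_def
      by (meson of_nat_le_iff order_trans)
    have den: "Y - real n * d \<le> d * real (Sigma_sum (Sstar j2) r)"
      using F3[OF feasT ij2(2)] ij1(4) ij2(2) unfolding Y_def
      by (smt (verit) of_nat_le_iff)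
    have Yd: "Y - real n * d > 0" using Ypos nd epsap by linarith
    have "\<rho>s = (d * real (Sigma_sum (Sstar i2) r)) / (d * real (Sigma_sum (Sstar j2) r))"
      unfolding \<rho>s_def using dpos by simp
    also have "\<dots> \<le> X / (Y - real n * d)"
      using num den Yd dpos by (intro frac_le) (auto simp: X_def)
    finally show ?thesis .
  qed
  have key: "X / (Y - real n * d) \<le> Rs * (1 + 2 * \<epsilon> / 3)"
  proof -
    have Yd: "Y - real n * d > 0" using Ypos nd epsap by linarith
    have "Y \<le> (Y - real n * d) * (1 + 2 * \<epsilon> / 3)"
    proof -
      have "real n * d \<le> \<epsilon> * Y / 3" using nd Ypos assms(6) by (simp add: mult_left_mono)
      hence "real n * d * (1 + 2 * \<epsilon> / 3) \<le> \<epsilon> * Y / 3 * (1 + 2 * \<epsilon> / 3)"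
        using assms(6) by (intro mult_right_mono) auto
      also have "\<dots> \<le> \<epsilon> * Y / 3 * 2" using assms(6,7) Ypos ap
        by (intro mult_left_mono) auto
      finally show ?thesis by (simp add: algebra_simps)
    qed
    hence "X * Y \<le> X * ((Y - real n * d) * (1 + 2 * \<epsilon> / 3))"
      using YX Ypos ap by (intro mult_left_mono) auto
    thus ?thesis unfolding Rs_def using Yd Ypos ap
      by (simp add: divide_le_eq field_simps)
  qed
  have rho: "\<rho> \<le> Rs * (1 + 2 * \<epsilon> / 3)" using rr rs key by linarith
  have rho0: "\<rho> \<ge> 0" unfolding \<rho>_def by simp
  have main: "real (Sigma_sum (S i) a) \<le> ((1 + \<epsilon>) * Rs) * real (Sigma_sum (S j) a)"
    if ij: "i \<in> {1..k}" "j \<in> {1..k}" for i j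
  proof -
    let ?Ai = "real (Sigma_sum (S i) a)" and ?Aj = "real (Sigma_sum (S j) a)"
    let ?Ri = "real (Sigma_sum (S i) r)" and ?Rj = "real (Sigma_sum (S j) r)"
    have j3pos: "real (Sigma_sum (S j3) r) > 0" using posR[OF feasS] ij3(2) by simp
    have "?Ri \<le> real (Sigma_sum (S i3) r)" using ij3(4) ij by simp
    also have "\<dots> = \<rho> * real (Sigma_sum (S j3) r)" unfolding \<rho>_def using j3pos by simp
    also have "\<dots> \<le> \<rho> * ?Rj" using ij3(4) ij rho0 by (intro mult_left_mono) auto
    finally have RiRj: "?Ri \<le> \<rho> * ?Rj" .
    have "?Ai \<le> d * ?Ri + real n * d" using F3[OF feasS ij(1)] .
    also have "\<dots> \<le> d * (\<rho> * ?Rj) + real n * d" using RiRj dpos by simp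
    also have "\<dots> = \<rho> * (d * ?Rj) + real n * d" by simp
    also have "\<dots> \<le> \<rho> * ?Aj + real n * d" using F2[OF feasS ij(2)] rho0
      by (simp add: mult_left_mono)
    also have "\<dots> \<le> \<rho> * ?Aj + \<epsilon> / 3 * ?Aj" using nd F1[OF feasS ij(2)] assms(6)
      by (simp add: mult_left_mono)
    also have "\<dots> = (\<rho> + \<epsilon> / 3) * ?Aj" by (simp add: algebra_simps)
    also have "\<dots> \<le> ((1 + \<epsilon>) * Rs) * ?Aj"
    proof (rule mult_right_mono)
      have "\<rho> + \<epsilon> / 3 \<le> Rs * (1 + 2 * \<epsilon> / 3) + Rs * (\<epsilon> / 3)"
        using rho Rs1 assms(6) by (smt (verit) mult_le_cancel_right1 divide_pos_pos)
      thus "\<rho> + \<epsilon> / 3 \<le> (1 + \<epsilon>) * Rs" by (simp add: algebra_simps)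
    qed simp
    finally show ?thesis .
  qed
  have "ratio_R k S a \<le> ereal ((1 + \<epsilon>) * Rs)"
    using ratio_le[OF k1 posA[OF feasS]] main by blast
  also have "\<dots> = ereal (1 + \<epsilon>) * ratio_R k Sstar a"
    using ij1(3) unfolding Rs_def X_def Y_def by simp
  finally show ?thesis .
qed

end
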